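(* Suppose every request of the input $\sigma$ is a triggering request with respect to ALG run on $\sigma$. Let $t$ be any time and let $R$ be the set of indices of requests that have arrived by time $t$ and are pending in ALG at time $t$. For $k\in R$ let $x_k$ denote the position of $e_k$ in ALG's list at time $t$. Then the positions $x_k$, $k\in R$, are pairwise distinct; writing $R=\{k_1,\dots,k_d\}$ with $1\le x_{k_1}<x_{k_2}<\dots<x_{k_d}\le n$, we have: (1) $q_{k_\ell}\le q_{k_{\ell+1}}$ for every $\ell\in[d-1]$, i.e. ALG serves $r_{k_\ell}$ no later than $r_{k_{\ell+1}}$; (2) $2x_{k_\ell}\le x_{k_{\ell+1}}$ for every $\ell\in[d-1]$; (3) $d\le\log_2 n+1$.
   Context: List Update with Time Windows. A set $\mathbb{E}$ of $n$ elements is kept in an ordered list (position $1$ is the head). An input $\sigma$ is a sequence of requests $r_1,\dots,r_m$; request $r_k$ specifies an element $e_k\in\mathbb{E}$, an arrival time $a_k$ and a deadline $q_k\ge a_k$. An algorithm may perform an access up to position $i$ at cost $i$, serving every pending request whose element currently lies in positions $1,\dots,i$, and may swap adjacent elements at cost $1$; actions are instantaneous; every request must be served within $[a_k,q_k]$. Algorithm ALG: whenever the current time equals the deadline of at least one pending request, let the triggering element be the element at the largest current position among those elements having a pending request whose deadline is the current time, and let $i$ be its position. ALG accesses the first $\min(2i-1,n)$ positions and then moves the triggering element to the front by $i-1$ adjacent swaps. At each such event the triggering request is one (arbitrarily fixed) pending request for the triggering element whose deadline is the current time. A request of $\sigma$ is a triggering request if it is the triggering request of some event of ALG on $\sigma$.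 *)

theory Defs
  imports Complex_Main
begin

text \<open>The list of elements is an 'a list (distinct),
position 1 is the head.  Requests are indexed by k < m; request k has element e k,
arrival time a k and deadline q k (times are reals).  A state of ALG is a pair (L, S)
of the current list and the set of indices of requests already served.\<close>

fun pos :: "'a list \<Rightarrow> 'a \<Rightarrow> nat" where
  "pos [] x = 0"
| "pos (y # ys) x = (if y = x then 1 else Suc (pos ys x))"

definition pending :: "(nat \<Rightarrow> real) \<Rightarrow> nat \<Rightarrow> nat set \<Rightarrow> real \<Rightarrow> nat set" where
  "pending a m S tau = {k. k < m \<and> a k \<le> tau \<and> k \<notin> S}"

definition due :: "(nat \<Rightarrow> real) \<Rightarrow> (nat \<Rightarrow> real) \<Rightarrow> nat \<Rightarrow> nat set \<Rightarrow> real \<Rightarrow> nat set" where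
  "due a q m S tau = {k \<in> pending a m S tau. q k = tau}"

definition trig_pos :: "(nat \<Rightarrow> 'a) \<Rightarrow> (nat \<Rightarrow> real) \<Rightarrow> (nat \<Rightarrow> real) \<Rightarrow> nat
    \<Rightarrow> 'a list \<times> nat set \<Rightarrow> real \<Rightarrow> nat" where
  "trig_pos e a q m st tau = Max ((\<lambda>k. pos (fst st) (e k)) ` due a q m (snd st) tau)"

definition trig_elem :: "(nat \<Rightarrow> 'a) \<Rightarrow> (nat \<Rightarrow> real) \<Rightarrow> (nat \<Rightarrow> real) \<Rightarrow> nat
    \<Rightarrow> 'a list \<times> nat set \<Rightarrow> real \<Rightarrow> 'a" where
  "trig_elem e a q m st tau = fst st ! (trig_pos e a q m st tau - 1)"

definition alg_step :: "(nat \<Rightarrow> 'a) \<Rightarrow> (nat \<Rightarrow> real) \<Rightarrow> (nat \<Rightarrow> real) \<Rightarrow> nat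
    \<Rightarrow> real \<Rightarrow> 'a list \<times> nat set \<Rightarrow> 'a list \<times> nat set" where
  "alg_step e a q m tau st =
     (if due a q m (snd st) tau = {} then st
      else (let L = fst st; S = snd st;
                i = trig_pos e a q m st tau;
                x = trig_elem e a q m st tau
            in (x # remove1 x L,
                S \<union> {k \<in> pending a m S tau. pos L (e k) \<le> min (2 * i - 1) (length L)})))"

text \<open>The distinct deadlines in increasing order (the only times ALG acts).\<close>
definition deadlines :: "(nat \<Rightarrow> real) \<Rightarrow> nat \<Rightarrow> real list" where
  "deadlines q m = sorted_list_of_set (q ` {..<m})"

definition state_after :: "(nat \<Rightarrow> 'a) \<Rightarrow> (nat \<Rightarrow> real) \<Rightarrow> (nat \<Rightarrow> real) \<Rightarrow> nat
    \<Rightarrow> 'a list \<Rightarrow> real \<Rightarrow> 'a list \<times> nat set" where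
  "state_after e a q m L0 t = fold (alg_step e a q m) (filter (\<lambda>tau. tau \<le> t) (deadlines q m)) (L0, {})"

definition state_before :: "(nat \<Rightarrow> 'a) \<Rightarrow> (nat \<Rightarrow> real) \<Rightarrow> (nat \<Rightarrow> real) \<Rightarrow> nat
    \<Rightarrow> 'a list \<Rightarrow> real \<Rightarrow> 'a list \<times> nat set" where
  "state_before e a q m L0 t = fold (alg_step e a q m) (filter (\<lambda>tau. tau < t) (deadlines q m)) (L0, {})"

text \<open>Triggering requests: ch is the fixed (arbitrary) rule choosing, at time tau, one
request among the pending requests for the triggering element with deadline tau.\<close>
definition triggering :: "(nat \<Rightarrow> 'a) \<Rightarrow> (nat \<Rightarrow> real) \<Rightarrow> (nat \<Rightarrow> real) \<Rightarrow> nat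
    \<Rightarrow> 'a list \<Rightarrow> (real \<Rightarrow> nat set \<Rightarrow> nat) \<Rightarrow> nat set" where
  "triggering e a q m L0 ch =
     {ch tau {k \<in> due a q m (snd (state_before e a q m L0 tau)) tau.
                e k = trig_elem e a q m (state_before e a q m L0 tau) tau}
      | tau. tau \<in> q ` {..<m} \<and> due a q m (snd (state_before e a q m L0 tau)) tau \<noteq> {}}"

end

theory Submission imports Defs begin

lemma pos_gt0: "y \<in> set L \<Longrightarrow> 0 < pos L y"
  by (induction L) auto

lemma pos_le_len: "y \<in> set L \<Longrightarrow> pos L y \<le> length L"
  by (induction L) auto

lemma nth_pos: "y \<in> set L \<Longrightarrow> L ! (pos L y - 1) = y"
proof (induction L)
  case Nil then show ?case by simp
next
  case (Cons z zs)
  show ?case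
  proof (cases "z = y")
    case True then show ?thesis by simp
  next
    case False
    then have "y \<in> set zs" using Cons.prems by simp
    then have "pos zs y \<ge> 1" using pos_gt0 by fastforce
    then show ?thesis using False Cons.IH \<open>y \<in> set zs\<close>
      by (simp add: nth_Cons')
  qed
qed

lemma pos_nth: "distinct L \<Longrightarrow> j < length L \<Longrightarrow> pos L (L ! j) = Suc j"
proof (induction L arbitrary: j)
  case Nil then show ?case by simp
next
  case (Cons z zs)
  then show ?case
  proof (cases j)
    case 0 then show ?thesis by simp
  next
    case (Suc j')
    then have "z \<noteq> zs ! j'" using Cons.prems by (metis distinct.simps(2) length_Cons not_less_eq nth_mem)
    then show ?thesis using Cons Suc by simp
  qed
qed

lemma pos_inj: "x \<in> set L \<Longrightarrow> y \<in> set L \<Longrightarrow> pos L x = pos L y \<Longrightarrow> x = y"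
  by (metis nth_pos)

lemma pos_remove1: "distinct L \<Longrightarrow> x \<in> set L \<Longrightarrow> pos L x < pos L y \<Longrightarrow> pos (remove1 x L) y = pos L y - 1"
proof (induction L)
  case Nil then show ?case by simp
next
  case (Cons z zs)
  show ?case
  proof (cases "z = x")
    case True
    then show ?thesis using Cons.prems by (auto split: if_splits)
  next
    case False
    then have xz: "x \<in> set zs" using Cons.prems by simp
    have "z \<noteq> y" using Cons.prems False by auto
    then have "pos zs x < pos zs y" using Cons.prems False by simp
    moreover have "pos zs x \<ge> 1" using xz pos_gt0 by fastforce
    ultimately show ?thesis using Cons False \<open>z \<noteq> y\<close> xz by simp
  qed
qed

lemma filter_split:
  assumes "sorted D" "\<forall>x y. x \<le> y \<longrightarrow> P y \<longrightarrow> P x" "\<forall>x. P x \<longrightarrow> Q x"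
  shows "filter Q D = filter P D @ filter (\<lambda>x. Q x \<and> \<not> P x) D"
  using assms
proof (induction D)
  case Nil then show ?case by simp
next
  case (Cons z zs)
  show ?case
  proof (cases "P z")
    case True then show ?thesis using Cons by simp
  next
    case False
    then have "\<forall>y\<in>set (z#zs). \<not> P y" using Cons.prems by auto
    then have "filter P (z#zs) = []" by (simp add: filter_empty_conv)
    moreover have "filter (\<lambda>x. Q x \<and> \<not> P x) (z#zs) = filter Q (z#zs)"
      using \<open>\<forall>y\<in>set (z#zs). \<not> P y\<close> by (intro filter_cong) auto
    ultimately show ?thesis by simp
  qed
qed

lemma fold_split:
  assumes "sorted D" "\<forall>x y. x \<le> y \<longrightarrow> P y \<longrightarrow> P x" "\<forall>x. P x \<longrightarrow> Q x"
  shows "fold f (filter Q D) s = fold f (filter (\<lambda>x. Q x \<and> \<not> P x) D) (fold f (filter P D) s)"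
  using filter_split[OF assms] by simp

lemma filter_eq_single: "distinct D \<Longrightarrow> t \<in> set D \<Longrightarrow> filter (\<lambda>x. x = t) D = [t]"
  by (induction D) (auto simp: filter_empty_conv)

lemma doubling:
  "\<forall>A. finite A \<and> card A = Suc c \<and> (\<forall>u\<in>A. (1::nat) \<le> u) \<and> (\<forall>u\<in>A. \<forall>v\<in>A. u < v \<longrightarrow> 2*u \<le> v)
     \<longrightarrow> 2^c \<le> Max A"
proof (induction c)
  case 0
  then show ?case
    by (metis One_nat_def card_1_singletonE Max_singleton insertI1 power_0)
next
  case (Suc c)
  show ?case
  proof (intro allI impI)
    fix A :: "nat set"
    assume h: "finite A \<and> card A = Suc (Suc c) \<and> (\<forall>u\<in>A. 1 \<le> u) \<and> (\<forall>u\<in>A. \<forall>v\<in>A. u < v \<longrightarrow> 2*u \<le> v)"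
    then have ne: "A \<noteq> {}" by auto
    define M where "M = Max A"
    have MA: "M \<in> A" using h ne M_def by simp
    define A' where "A' = A - {M}"
    have cA': "card A' = Suc c" using h MA A'_def by simp
    have fA': "finite A'" using h A'_def by simp
    have "2^c \<le> Max A'" using Suc.IH h cA' fA' A'_def by auto
    moreover have neA': "A' \<noteq> {}" using cA' by auto
    then have "Max A' \<in> A'" using fA' by simp
    then have "Max A' < M" using M_def h A'_def
      by (metis DiffD1 DiffD2 Max_ge insertI1 le_neq_implies_less)
    then have "2 * Max A' \<le> M" using h \<open>Max A' \<in> A'\<close> MA A'_def by auto
    ultimately show "2 ^ Suc c \<le> Max A" using M_def by simp
  qed
qed

context
  fixes e :: "nat \<Rightarrow> 'a" and a q :: "nat \<Rightarrow> real" and m :: nat and L0 :: "'a list"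
  assumes E: "\<forall>k<m. e k \<in> set L0"
begin

lemma due_finite: "finite (due a q m S tau)"
  unfolding due_def pending_def by auto

lemma trig_facts:
  assumes inv: "set (fst st) = set L0" and ne: "due a q m (snd st) tau \<noteq> {}"
  shows "1 \<le> trig_pos e a q m st tau \<and> trig_pos e a q m st tau \<le> length (fst st)
    \<and> (\<forall>k\<in>due a q m (snd st) tau. pos (fst st) (e k) \<le> trig_pos e a q m st tau)
    \<and> (\<exists>k\<in>due a q m (snd st) tau. pos (fst st) (e k) = trig_pos e a q m st tau)"
proof -
  let ?A = "(\<lambda>k. pos (fst st) (e k)) ` due a q m (snd st) tau"
  have fin: "finite ?A" using due_finite by simp
  have ne': "?A \<noteq> {}" using ne by simp
  have tp: "trig_pos e a q m st tau = Max ?A" unfolding trig_pos_def by simp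
  have inL: "\<forall>k\<in>due a q m (snd st) tau. e k \<in> set (fst st)"
    using E inv unfolding due_def pending_def by auto
  have "Max ?A \<in> ?A" using fin ne' by (rule Max_in)
  then obtain k0 where k0: "k0 \<in> due a q m (snd st) tau" "pos (fst st) (e k0) = Max ?A" by auto
  have ge: "\<forall>k\<in>due a q m (snd st) tau. pos (fst st) (e k) \<le> Max ?A" using fin by auto
  have "0 < Max ?A" using k0 inL pos_gt0 by metis
  moreover have "Max ?A \<le> length (fst st)" using k0 inL pos_le_len by metis
  ultimately show ?thesis using tp ge k0 by auto
qed

lemma trig_elem_facts:
  assumes inv: "distinct (fst st)" "set (fst st) = set L0" and ne: "due a q m (snd st) tau \<noteq> {}"
  shows "trig_elem e a q m st tau \<in> set (fst st)
     \<and> pos (fst st) (trig_elem e a q m st tau) = trig_pos e a q m st tau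
     \<and> (\<exists>k\<in>due a q m (snd st) tau. e k = trig_elem e a q m st tau)"
proof -
  obtain k where k: "k\<in>due a q m (snd st) tau" "pos (fst st) (e k) = trig_pos e a q m st tau"
    and b: "1 \<le> trig_pos e a q m st tau" "trig_pos e a q m st tau \<le> length (fst st)"
    using trig_facts[OF inv(2) ne] by blast
  have lt: "trig_pos e a q m st tau - 1 < length (fst st)" using b by simp
  have te: "trig_elem e a q m st tau = fst st ! (trig_pos e a q m st tau - 1)" unfolding trig_elem_def by simp
  have "e k \<in> set (fst st)" using k(1) E inv unfolding due_def pending_def by auto
  then have "fst st ! (pos (fst st) (e k) - 1) = e k" by (rule nth_pos)
  then have "e k = trig_elem e a q m st tau" using te k(2) by simp
  moreover have "pos (fst st) (trig_elem e a q m st tau) = trig_pos e a q m st tau"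
    using te pos_nth[OF inv(1) lt] b by simp
  moreover have "trig_elem e a q m st tau \<in> set (fst st)" using te lt by simp
  ultimately show ?thesis using k(1) by blast
qed

lemma step_nonempty:
  "due a q m (snd st) tau \<noteq> {} \<Longrightarrow> alg_step e a q m tau st =
     (trig_elem e a q m st tau # remove1 (trig_elem e a q m st tau) (fst st),
      snd st \<union> {k \<in> pending a m (snd st) tau. pos (fst st) (e k) \<le> min (2 * trig_pos e a q m st tau - 1) (length (fst st))})"
  unfolding alg_step_def by (simp add: Let_def)

lemma step_mono: "snd st \<subseteq> snd (alg_step e a q m tau st)"
  unfolding alg_step_def by (auto simp: Let_def)

lemma fold_mono: "snd st \<subseteq> snd (fold (alg_step e a q m) taus st)"
proof (induction taus arbitrary: st)
  case Nil then show ?case by simp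
next
  case (Cons x xs)
  then show ?case using step_mono[of st x] Cons.IH[of "alg_step e a q m x st"] by (simp add: order_trans)
qed

lemma step_inv:
  assumes "distinct (fst st)" "set (fst st) = set L0"
  shows "distinct (fst (alg_step e a q m tau st)) \<and> set (fst (alg_step e a q m tau st)) = set L0"
proof (cases "due a q m (snd st) tau = {}")
  case True then show ?thesis using assms unfolding alg_step_def by simp
next
  case False
  have x: "trig_elem e a q m st tau \<in> set (fst st)" using trig_elem_facts[OF assms False] by blast
  show ?thesis using step_nonempty[OF False] assms x by (auto simp: set_remove1_eq)
qed

lemma fold_inv:
  "distinct (fst st) \<Longrightarrow> set (fst st) = set L0 \<Longrightarrow>
   distinct (fst (fold (alg_step e a q m) taus st)) \<and> set (fst (fold (alg_step e a q m) taus st)) = set L0"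
proof (induction taus arbitrary: st)
  case Nil then show ?case by simp
next
  case (Cons x xs)
  then show ?case using step_inv[of st x] Cons.IH[of "alg_step e a q m x st"] by simp
qed

lemma step_served:
  assumes inv: "distinct (fst st)" "set (fst st) = set L0" and ne: "due a q m (snd st) tau \<noteq> {}"
    and kp: "k \<in> pending a m (snd st) tau" and le: "pos (fst st) (e k) \<le> trig_pos e a q m st tau"
  shows "k \<in> snd (alg_step e a q m tau st)"
proof -
  have tf: "1 \<le> trig_pos e a q m st tau" using trig_facts[OF inv(2) ne] by auto
  have km: "k < m" using kp unfolding pending_def by auto
  have "e k \<in> set (fst st)" using E km inv by auto
  then have "pos (fst st) (e k) \<le> length (fst st)" by (rule pos_le_len)
  then have "pos (fst st) (e k) \<le> min (2 * trig_pos e a q m st tau - 1) (length (fst st))"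
    using le tf by auto
  then show ?thesis using step_nonempty[OF ne] kp by auto
qed

lemma step_unserved:
  assumes ne: "due a q m (snd st) tau \<noteq> {}"
    and kp: "k \<in> pending a m (snd st) tau" and kn: "k \<notin> snd (alg_step e a q m tau st)"
  shows "\<not> pos (fst st) (e k) \<le> min (2 * trig_pos e a q m st tau - 1) (length (fst st))"
  using step_nonempty[OF ne] kp kn by auto

lemma step_keep:
  assumes inv: "distinct (fst st)" "set (fst st) = set L0"
    and kp: "k \<in> pending a m (snd st) tau" and kn: "k \<notin> snd (alg_step e a q m tau st)"
    and le: "pos (fst st) (e k) \<le> pos (fst st) y"
  shows "pos (fst (alg_step e a q m tau st)) y = pos (fst st) y"
proof (cases "due a q m (snd st) tau = {}")
  case True then show ?thesis unfolding alg_step_def by simp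
next
  case False
  let ?i = "trig_pos e a q m st tau" and ?x = "trig_elem e a q m st tau"
  have tf: "1 \<le> ?i" "?i \<le> length (fst st)" using trig_facts[OF inv(2) False] by auto
  have xf: "?x \<in> set (fst st)" "pos (fst st) ?x = ?i" using trig_elem_facts[OF inv False] by auto
  have km: "k < m" using kp unfolding pending_def by auto
  have ekL: "e k \<in> set (fst st)" using E km inv by auto
  have "\<not> pos (fst st) (e k) \<le> min (2 * ?i - 1) (length (fst st))"
    using step_unserved[OF False kp kn] .
  then have "?i < pos (fst st) (e k)" using pos_le_len[OF ekL] tf by auto
  then have lt: "pos (fst st) ?x < pos (fst st) y" using xf le by simp
  then have ne: "?x \<noteq> y" by auto
  have "pos (remove1 ?x (fst st)) y = pos (fst st) y - 1" using pos_remove1[OF inv(1) xf(1) lt] .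
  moreover have "pos (fst st) y \<ge> 1" using lt by simp
  ultimately show ?thesis using step_nonempty[OF False] ne by simp
qed

lemma fold_keep:
  "\<forall>st. distinct (fst st) \<and> set (fst st) = set L0 \<and> k < m \<and> (\<forall>tau\<in>set taus. a k \<le> tau)
     \<and> k \<notin> snd (fold (alg_step e a q m) taus st) \<and> pos (fst st) (e k) \<le> pos (fst st) y
     \<longrightarrow> pos (fst (fold (alg_step e a q m) taus st)) y = pos (fst st) y"
proof (induction taus)
  case Nil then show ?case by simp
next
  case (Cons tau taus)
  show ?case
  proof (intro allI impI)
    fix st assume h: "distinct (fst st) \<and> set (fst st) = set L0 \<and> k < m \<and> (\<forall>tau\<in>set (tau # taus). a k \<le> tau)
     \<and> k \<notin> snd (fold (alg_step e a q m) (tau # taus) st) \<and> pos (fst st) (e k) \<le> pos (fst st) y"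
    let ?st' = "alg_step e a q m tau st"
    have kn': "k \<notin> snd ?st'" using h fold_mono[of ?st' taus] by auto
    have kn0: "k \<notin> snd st" using kn' step_mono by blast
    have kp: "k \<in> pending a m (snd st) tau" using h kn0 unfolding pending_def by auto
    have inv': "distinct (fst ?st') \<and> set (fst ?st') = set L0" using step_inv h by blast
    have py: "pos (fst ?st') y = pos (fst st) y" using step_keep h kp kn' by blast
    have pk: "pos (fst ?st') (e k) = pos (fst st) (e k)" using step_keep[of st k tau "e k"] h kp kn' by auto
    have "pos (fst (fold (alg_step e a q m) taus ?st')) y = pos (fst ?st') y"
      using spec[OF Cons.IH, of ?st'] inv' h py pk kn' by auto
    then show "pos (fst (fold (alg_step e a q m) (tau # taus) st)) y = pos (fst st) y" using py by simp
  qed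
qed


lemma main_lemma:
  fixes n :: nat and ch :: "real \<Rightarrow> nat set \<Rightarrow> nat" and t :: real
  assumes d0: "distinct L0" and len: "length L0 = n"
    and aq: "\<forall>k<m. a k \<le> q k"
    and chS: "\<forall>tau S. S \<noteq> {} \<longrightarrow> ch tau S \<in> S"
    and trig: "\<forall>k<m. k \<in> triggering e a q m L0 ch"
  shows "let L = fst (state_after e a q m L0 t);
             R = pending a m (snd (state_after e a q m L0 t)) t;
             x = (\<lambda>k. pos L (e k))
         in inj_on x R
            \<and> (\<forall>k\<in>R. \<forall>k'\<in>R. x k < x k' \<and> \<not> (\<exists>k''\<in>R. x k < x k'' \<and> x k'' < x k')
                  \<longrightarrow> q k \<le> q k' \<and> 2 * x k \<le> x k')
            \<and> real (card R) \<le> log 2 (real n) + 1"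
proof -
  define D where "D = deadlines q m"
  have Ds: "sorted D" "distinct D" "set D = q ` {..<m}" unfolding D_def deadlines_def by auto
  define SA where "SA = state_after e a q m L0"
  define SB where "SB = state_before e a q m L0"
  let ?f = "alg_step e a q m"
  have SA': "SA t = fold ?f (filter (\<lambda>x. x \<le> t) D) (L0,{})" for t
    unfolding SA_def state_after_def D_def by simp
  have SB': "SB t = fold ?f (filter (\<lambda>x. x < t) D) (L0,{})" for t
    unfolding SB_def state_before_def D_def by simp
  have invA: "distinct (fst (SA t)) \<and> set (fst (SA t)) = set L0" for t
    using fold_inv[of "(L0,{})"] d0 SA' by simp
  have invB: "distinct (fst (SB t)) \<and> set (fst (SB t)) = set L0" for t
    using fold_inv[of "(L0,{})"] d0 SB' by simp
  have lenB: "length (fst (SB t)) = n" for t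
    using invB[of t] d0 len by (metis distinct_card)
  have AA: "SA t' = fold ?f (filter (\<lambda>x. x \<le> t' \<and> \<not> x \<le> t) D) (SA t)" if "t \<le> t'" for t t'
  proof -
    have "fold ?f (filter (\<lambda>x. x \<le> t') D) (L0,{}) = fold ?f (filter (\<lambda>x. x \<le> t' \<and> \<not> x \<le> t) D) (fold ?f (filter (\<lambda>x. x \<le> t) D) (L0,{}))"
      by (rule fold_split) (use Ds that in auto)
    then show ?thesis by (simp add: SA')
  qed
  have AB: "SB t' = fold ?f (filter (\<lambda>x. x < t' \<and> \<not> x \<le> t) D) (SA t)" if "t < t'" for t t'
  proof -
    have "fold ?f (filter (\<lambda>x. x < t') D) (L0,{}) = fold ?f (filter (\<lambda>x. x < t' \<and> \<not> x \<le> t) D) (fold ?f (filter (\<lambda>x. x \<le> t) D) (L0,{}))"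
      by (rule fold_split) (use Ds that in auto)
    then show ?thesis by (simp add: SA' SB')
  qed
  have BA: "SA tau = ?f tau (SB tau)" if "tau \<in> q ` {..<m}" for tau
  proof -
    have "fold ?f (filter (\<lambda>x. x \<le> tau) D) (L0,{}) = fold ?f (filter (\<lambda>x. x \<le> tau \<and> \<not> x < tau) D) (fold ?f (filter (\<lambda>x. x < tau) D) (L0,{}))"
      by (rule fold_split) (use Ds in auto)
    moreover have "filter (\<lambda>x. x \<le> tau \<and> \<not> x < tau) D = filter (\<lambda>x. x = tau) D"
      by (rule filter_cong) auto
    moreover have "filter (\<lambda>x. x = tau) D = [tau]" by (rule filter_eq_single) (use Ds that in auto)
    ultimately show ?thesis by (simp add: SA' SB')
  qed
  have mAB: "snd (SA t) \<subseteq> snd (SB t')" if "t < t'" for t t'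
    using AB[OF that] fold_mono by simp
  have mAA: "snd (SA t) \<subseteq> snd (SA t')" if "t \<le> t'" for t t'
    using AA[OF that] fold_mono by simp
  define C where "C tau = {k' \<in> due a q m (snd (SB tau)) tau. e k' = trig_elem e a q m (SB tau) tau}" for tau
  have T: "k \<in> due a q m (snd (SB (q k))) (q k) \<and> e k = trig_elem e a q m (SB (q k)) (q k)
      \<and> k = ch (q k) (C (q k))" if "k < m" for k
  proof -
    have "\<exists>tau. k = ch tau (C tau) \<and> tau \<in> q ` {..<m} \<and> due a q m (snd (SB tau)) tau \<noteq> {}"
      using trig that unfolding triggering_def C_def SB_def by blast
    then obtain tau where tau: "k = ch tau (C tau)" "tau \<in> q ` {..<m}" "due a q m (snd (SB tau)) tau \<noteq> {}"
      by blast
    have "\<exists>k'\<in>due a q m (snd (SB tau)) tau. e k' = trig_elem e a q m (SB tau) tau"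
      using trig_elem_facts[of "SB tau" tau] invB tau(3) by blast
    then have "C tau \<noteq> {}" unfolding C_def by blast
    then have "k \<in> C tau" using chS tau(1) by metis
    then have "q k = tau" unfolding C_def due_def by simp
    then show ?thesis using \<open>k \<in> C tau\<close> tau(1) unfolding C_def by simp
  qed
  have Tinj: "k = k'" if "k < m" "k' < m" "q k = q k'" for k k'
    using T[OF that(1)] T[OF that(2)] that(3) by metis
  have served: "k \<in> snd (SA t')" if "k < m" "q k \<le> t'" for k t'
  proof -
    have kd: "k \<in> due a q m (snd (SB (q k))) (q k)" using T that by blast
    then have ne: "due a q m (snd (SB (q k))) (q k) \<noteq> {}" by blast
    have kp: "k \<in> pending a m (snd (SB (q k))) (q k)" using kd unfolding due_def by blast
    have "pos (fst (SB (q k))) (e k) \<le> trig_pos e a q m (SB (q k)) (q k)"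
      using trig_facts[of "SB (q k)" "q k"] invB ne kd by blast
    then have "k \<in> snd (?f (q k) (SB (q k)))"
      using step_served[of "SB (q k)" "q k" k] invB ne kp by blast
    then have "k \<in> snd (SA (q k))" using BA that by simp
    then show ?thesis using mAA[OF that(2)] by blast
  qed
  have unsB: "k \<notin> snd (SB (q k))" if "k < m" for k
    using T[OF that] unfolding due_def pending_def by simp
  have mBA: "snd (SB tau) \<subseteq> snd (SA tau)" if "tau \<in> q ` {..<m}" for tau
    using BA[OF that] step_mono by simp
  define Lt where "Lt = fst (SA t)"
  define R where "R = pending a m (snd (SA t)) t"
  define x where "x k = pos Lt (e k)" for k
  have RF: "k < m \<and> a k \<le> t \<and> k \<notin> snd (SA t) \<and> t < q k" if "k \<in> R" for k
  proof -
    have h: "k < m" "a k \<le> t" "k \<notin> snd (SA t)" using that unfolding R_def pending_def by auto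
    have "\<not> q k \<le> t" using served[of k t] h by blast
    then show ?thesis using h by simp
  qed
  have xin: "e k \<in> set Lt \<and> 1 \<le> x k \<and> x k \<le> n" if "k \<in> R" for k
  proof -
    have "e k \<in> set Lt" using E RF[OF that] invA unfolding Lt_def by auto
    moreover have "length Lt = n" using invA[of t] d0 len unfolding Lt_def by (metis distinct_card)
    ultimately show ?thesis using pos_gt0 pos_le_len unfolding x_def
      by (metis One_nat_def Suc_leI)
  qed
  have H: "k' \<in> pending a m (snd (SB (q k))) (q k) \<and> k' \<notin> snd (SA (q k))"
    if "k \<in> R" "k' \<in> R" "q k < q k'" for k k'
  proof -
    have qk: "q k \<in> q ` {..<m}" using RF[OF that(1)] by simp
    have "k' \<notin> snd (SA (q k))" using unsB[of k'] RF[OF that(2)] mAB[OF that(3)] by blast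
    moreover then have "k' \<notin> snd (SB (q k))" using mBA[OF qk] by blast
    ultimately show ?thesis using RF[OF that(1)] RF[OF that(2)] unfolding pending_def by auto
  qed
  have keepB: "pos (fst (SB tau)) y = pos Lt y"
    if "k \<in> R" "t < tau" "k \<notin> snd (SB tau)" "x k \<le> pos Lt y" for k tau y
  proof -
    have "\<forall>st. distinct (fst st) \<and> set (fst st) = set L0 \<and> k < m \<and> (\<forall>tau'\<in>set (filter (\<lambda>x. x < tau \<and> \<not> x \<le> t) D). a k \<le> tau')
     \<and> k \<notin> snd (fold ?f (filter (\<lambda>x. x < tau \<and> \<not> x \<le> t) D) st) \<and> pos (fst st) (e k) \<le> pos (fst st) y
     \<longrightarrow> pos (fst (fold ?f (filter (\<lambda>x. x < tau \<and> \<not> x \<le> t) D) st)) y = pos (fst st) y"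
      by (rule fold_keep)
    then have imp: "distinct (fst (SA t)) \<and> set (fst (SA t)) = set L0 \<and> k < m \<and> (\<forall>tau'\<in>set (filter (\<lambda>x. x < tau \<and> \<not> x \<le> t) D). a k \<le> tau')
     \<and> k \<notin> snd (fold ?f (filter (\<lambda>x. x < tau \<and> \<not> x \<le> t) D) (SA t)) \<and> pos (fst (SA t)) (e k) \<le> pos (fst (SA t)) y
     \<longrightarrow> pos (fst (fold ?f (filter (\<lambda>x. x < tau \<and> \<not> x \<le> t) D) (SA t))) y = pos (fst (SA t)) y"
      by (rule spec)
    have "k < m" "a k \<le> t" using RF[OF that(1)] by auto
    then have "\<forall>tau'\<in>set (filter (\<lambda>x. x < tau \<and> \<not> x \<le> t) D). a k \<le> tau'" by auto
    then show ?thesis using imp \<open>k < m\<close> invA[of t] AB[OF that(2)] that unfolding Lt_def x_def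
      by simp
  qed
  have keepA: "pos (fst (SA tau)) y = pos Lt y"
    if "k \<in> R" "t \<le> tau" "k \<notin> snd (SA tau)" "x k \<le> pos Lt y" for k tau y
  proof -
    have "\<forall>st. distinct (fst st) \<and> set (fst st) = set L0 \<and> k < m \<and> (\<forall>tau'\<in>set (filter (\<lambda>x. x \<le> tau \<and> \<not> x \<le> t) D). a k \<le> tau')
     \<and> k \<notin> snd (fold ?f (filter (\<lambda>x. x \<le> tau \<and> \<not> x \<le> t) D) st) \<and> pos (fst st) (e k) \<le> pos (fst st) y
     \<longrightarrow> pos (fst (fold ?f (filter (\<lambda>x. x \<le> tau \<and> \<not> x \<le> t) D) st)) y = pos (fst st) y"
      by (rule fold_keep)
    then have imp: "distinct (fst (SA t)) \<and> set (fst (SA t)) = set L0 \<and> k < m \<and> (\<forall>tau'\<in>set (filter (\<lambda>x. x \<le> tau \<and> \<not> x \<le> t) D). a k \<le> tau')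
     \<and> k \<notin> snd (fold ?f (filter (\<lambda>x. x \<le> tau \<and> \<not> x \<le> t) D) (SA t)) \<and> pos (fst (SA t)) (e k) \<le> pos (fst (SA t)) y
     \<longrightarrow> pos (fst (fold ?f (filter (\<lambda>x. x \<le> tau \<and> \<not> x \<le> t) D) (SA t))) y = pos (fst (SA t)) y"
      by (rule spec)
    have "k < m" "a k \<le> t" using RF[OF that(1)] by auto
    then have "\<forall>tau'\<in>set (filter (\<lambda>x. x \<le> tau \<and> \<not> x \<le> t) D). a k \<le> tau'" by auto
    then show ?thesis using imp \<open>k < m\<close> invA[of t] AA[OF that(2)] that unfolding Lt_def x_def
      by simp
  qed
  have noeq: "False" if "k \<in> R" "k' \<in> R" "e k = e k'" "q k < q k'" for k k'
  proof -
    have km: "k < m" using RF[OF that(1)] by simp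
    have qk: "q k \<in> q ` {..<m}" using km by simp
    have kd: "k \<in> due a q m (snd (SB (q k))) (q k)" using T km by blast
    then have ne: "due a q m (snd (SB (q k))) (q k) \<noteq> {}" by blast
    have "pos (fst (SB (q k))) (e k') \<le> trig_pos e a q m (SB (q k)) (q k)"
      using trig_facts[of "SB (q k)" "q k"] invB ne kd that(3) by metis
    then have "k' \<in> snd (?f (q k) (SB (q k)))"
      using step_served[of "SB (q k)" "q k" k'] invB ne H[OF that(1,2,4)] by blast
    then show False using H[OF that(1,2,4)] BA[OF qk] by simp
  qed
  have inj: "inj_on x R"
  proof (rule inj_onI)
    fix k k' assume kk: "k \<in> R" "k' \<in> R" "x k = x k'"
    then have ee: "e k = e k'" using xin pos_inj unfolding x_def by metis
    show "k = k'"
    proof (rule ccontr)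
      assume "k \<noteq> k'"
      then have "q k \<noteq> q k'" using Tinj RF kk by blast
      then show False using noeq[OF kk(1,2) ee] noeq[OF kk(2,1) ee[symmetric]] by linarith
    qed
  qed
  have order: "q k < q k'" if "k \<in> R" "k' \<in> R" "x k < x k'" for k k'
  proof (rule ccontr)
    assume "\<not> q k < q k'"
    moreover have "q k \<noteq> q k'" using Tinj RF that by (metis less_irrefl)
    ultimately have lt: "q k' < q k" by linarith
    have k'm: "k' < m" using RF[OF that(2)] by simp
    have qk': "q k' \<in> q ` {..<m}" using k'm by simp
    have "k \<notin> snd (SA (q k'))" using unsB[of k] RF[OF that(1)] mAB[OF lt] by blast
    moreover have "t \<le> q k'" using RF[OF that(2)] by simp
    ultimately have p: "pos (fst (SA (q k'))) (e k') = x k'"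
      using keepA[OF that(1)] that(3) unfolding x_def by simp
    have kd: "k' \<in> due a q m (snd (SB (q k'))) (q k')" "e k' = trig_elem e a q m (SB (q k')) (q k')"
      using T k'm by blast+
    then have ne: "due a q m (snd (SB (q k'))) (q k') \<noteq> {}" by blast
    have "fst (SA (q k')) = e k' # remove1 (e k') (fst (SB (q k')))"
      using BA[OF qk'] step_nonempty[OF ne] kd(2) by simp
    then have "x k' = 1" using p by simp
    then show False using that(3) xin[OF that(1)] by simp
  qed
  have dbl: "2 * x k \<le> x k'" if "k \<in> R" "k' \<in> R" "x k < x k'" for k k'
  proof -
    have lt: "q k < q k'" using order[OF that] .
    have km: "k < m" using RF[OF that(1)] by simp
    have kd: "k \<in> due a q m (snd (SB (q k))) (q k)" "e k = trig_elem e a q m (SB (q k)) (q k)"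
      using T km by blast+
    then have ne: "due a q m (snd (SB (q k))) (q k) \<noteq> {}" by blast
    have tq: "t < q k" using RF[OF that(1)] by simp
    have uk: "k \<notin> snd (SB (q k))" using unsB km by simp
    have p1: "pos (fst (SB (q k))) (e k) = x k" using keepB[OF that(1) tq uk] unfolding x_def by simp
    have p2: "pos (fst (SB (q k))) (e k') = x k'" using keepB[OF that(1) tq uk] that(3) unfolding x_def by simp
    have tp: "trig_pos e a q m (SB (q k)) (q k) = x k"
      using trig_elem_facts[of "SB (q k)" "q k"] invB ne kd(2) p1 by metis
    have qk: "q k \<in> q ` {..<m}" using km by simp
    have "\<not> pos (fst (SB (q k))) (e k') \<le> min (2 * trig_pos e a q m (SB (q k)) (q k) - 1) (length (fst (SB (q k))))"
      using step_unserved[OF ne] H[OF that(1,2) lt] BA[OF qk] by simp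
    then have "\<not> x k' \<le> min (2 * x k - 1) n" using p2 tp lenB by simp
    then show ?thesis using xin[OF that(2)] xin[OF that(1)] by auto
  qed
  have finR: "finite R" unfolding R_def pending_def by auto
  have cardb: "real (card R) \<le> log 2 (real n) + 1"
  proof (cases "R = {}")
    case True
    then show ?thesis
    proof (cases "n = 0")
      case True then show ?thesis using \<open>R = {}\<close> by (simp add: log_def)
    next
      case False then show ?thesis using \<open>R = {}\<close> by simp
    qed
  next
    case False
    define A where "A = x ` R"
    have cA: "card A = card R" using card_image[OF inj] A_def by simp
    have fA: "finite A" using finR A_def by simp
    have neA: "A \<noteq> {}" using False A_def by simp
    then have cpos: "card A = Suc (card A - 1)" using fA card_gt_0_iff by (metis Suc_pred')
    have "2 ^ (card A - 1) \<le> Max A"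
      using doubling[of "card A - 1"] fA cpos xin dbl unfolding A_def by (auto simp: image_iff)
    moreover have "Max A \<le> n" using fA neA xin unfolding A_def by auto
    ultimately have le: "(2::nat) ^ (card A - 1) \<le> n" by linarith
    then have npos: "0 < n" by (metis not_le not_less0 zero_less_power zero_less_numeral le_less_trans)
    have "real (2 ^ (card A - 1)) \<le> real n" using le by linarith
    then have "(2::real) ^ (card A - 1) \<le> real n" by simp
    then have "log 2 ((2::real) ^ (card A - 1)) \<le> log 2 (real n)"
      using npos by (subst log_le_cancel_iff) auto
    moreover have "log 2 ((2::real) ^ (card A - 1)) = real (card A - 1)"
      by (rule log_pow_cancel) auto
    ultimately have "real (card A - 1) \<le> log 2 (real n)" by simp
    then show ?thesis using cA cpos by linarith
  qed
  show ?thesis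
    unfolding Let_def SA_def[symmetric]
    using inj dbl order cardb unfolding Lt_def[symmetric] R_def[symmetric] x_def[symmetric]
    by (metis less_imp_le)
qed

end

theorem mainTheorem6:
  fixes L0 :: "'a list" and n m :: nat
    and e :: "nat \<Rightarrow> 'a" and a q :: "nat \<Rightarrow> real"
    and ch :: "real \<Rightarrow> nat set \<Rightarrow> nat" and t :: real
  assumes "distinct L0" and "length L0 = n"
    and "\<forall>k<m. e k \<in> set L0 \<and> a k \<le> q k"
    and "\<forall>tau S. S \<noteq> {} \<longrightarrow> ch tau S \<in> S"
    and "\<forall>k<m. k \<in> triggering e a q m L0 ch"
  shows "let L = fst (state_after e a q m L0 t);
             R = pending a m (snd (state_after e a q m L0 t)) t;
             x = (\<lambda>k. pos L (e k))
         in inj_on x R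
            \<and> (\<forall>k\<in>R. \<forall>k'\<in>R. x k < x k' \<and> \<not> (\<exists>k''\<in>R. x k < x k'' \<and> x k'' < x k')
                  \<longrightarrow> q k \<le> q k' \<and> 2 * x k \<le> x k')
            \<and> real (card R) \<le> log 2 (real n) + 1"
  by (rule main_lemma) (use assms in auto)

end
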